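(* Let $n\ge1$ and let $\mathbf d=(d_1<\dots<d_s)$ with $1\le d_1$, $d_s\le n$. Then the set of Bruhat polytopes $\{Q^{\mathbf d}_{u,v}:[u,v]\in\operatorname{BI}(\mathbf d,n)\}$ equals the set of twisted Bruhat polytopes $\{\widetilde Q^{\mathbf d}_{u,v}:[u,v]\in\widetilde{\operatorname{BI}}(\mathbf d,n)\}$.
   Context: $\operatorname{Sym}_n$ carries the Bruhat order: $u\le v$ iff some (equivalently every) reduced word for $v$ in the adjacent transpositions $\tau_i=(i,i+1)$ contains a subword that is a word for $u$. For $B\subseteq[n]$, $e_B=\sum_{i\in B}e_i$. Untwisted: for $x\in\operatorname{Sym}_n$ let $\pi^{\mathbf d}\phi(x)\in\mathbb{R}^n$ be the vector whose $k$-th coordinate is $\#\{j: x(k)\ge n+1-d_j\}$ (the image of the permutahedron vertex $(x(1),\dots,x(n))$). $\operatorname{BI}(\mathbf d,n)$ is the set of Bruhat intervals $[u,v]$ such that $v$ is Bruhat-minimal among all $x$ with $\pi^{\mathbf d}\phi(x)=\pi^{\mathbf d}\phi(v)$, and $Q^{\mathbf d}_{u,v}=\operatorname{conv}\{\pi^{\mathbf d}\phi(x):x\in[u,v]\}$. Twisted: for $x\in\operatorname{Sym}_n$ let $\pi^{\mathbf d}\psi(x)=e_{x([d_1])}+\dots+e_{x([d_s])}$ (the image of the vertex $x\cdot(n,n-1,\dots,1)$ of the permutahedron, where $(x\cdot y)_i=y_{x^{-1}(i)}$). $\widetilde{\operatorname{BI}}(\mathbf d,n)$ is the set of Bruhat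 intervals $[u,v]$ such that $v$ is Bruhat-minimal among all $x$ with $\pi^{\mathbf d}\psi(x)=\pi^{\mathbf d}\psi(v)$, and $\widetilde Q^{\mathbf d}_{u,v}=\operatorname{conv}\{\pi^{\mathbf d}\psi(x):x\in[u,v]\}$. *)

theory Defs
  imports "HOL-Analysis.Analysis" "HOL-Combinatorics.Combinatorics" "HOL-Library.Sublist"
begin

definition Sym :: "nat \<Rightarrow> (nat \<Rightarrow> nat) set" where
  "Sym n = {x. x permutes {1..n}}"

definition tau :: "nat \<Rightarrow> nat \<Rightarrow> nat" where
  "tau i = Transposition.transpose i (Suc i)"

definition word_prod :: "nat list \<Rightarrow> nat \<Rightarrow> nat" where
  "word_prod w = foldr (\<lambda>i f. tau i \<circ> f) w id"

definition is_word :: "nat \<Rightarrow> nat list \<Rightarrow> (nat \<Rightarrow> nat) \<Rightarrow> bool" where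
  "is_word n w x \<longleftrightarrow> set w \<subseteq> {1..<n} \<and> word_prod w = x"

definition reduced_word :: "nat \<Rightarrow> nat list \<Rightarrow> (nat \<Rightarrow> nat) \<Rightarrow> bool" where
  "reduced_word n w x \<longleftrightarrow> is_word n w x \<and> (\<forall>w'. is_word n w' x \<longrightarrow> length w \<le> length w')"

definition bruhat_le :: "nat \<Rightarrow> (nat \<Rightarrow> nat) \<Rightarrow> (nat \<Rightarrow> nat) \<Rightarrow> bool" where
  "bruhat_le n u v \<longleftrightarrow> (\<exists>w. reduced_word n w v \<and> (\<exists>w'. subseq w' w \<and> word_prod w' = u))"

definition bruhat_interval :: "nat \<Rightarrow> (nat \<Rightarrow> nat) \<Rightarrow> (nat \<Rightarrow> nat) \<Rightarrow> (nat \<Rightarrow> nat) set" where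
  "bruhat_interval n u v = {x \<in> Sym n. bruhat_le n u x \<and> bruhat_le n x v}"

(* vectors of R^n are represented as nat => real with coordinates 1..n (zero elsewhere);
   convex hull = set of all finite convex combinations *)
definition conv :: "(nat \<Rightarrow> real) set \<Rightarrow> (nat \<Rightarrow> real) set" where
  "conv S = {y. \<exists>F c. finite F \<and> F \<subseteq> S \<and> (\<forall>p\<in>F. 0 \<le> c p) \<and> sum c F = 1 \<and>
                      y = (\<lambda>k. \<Sum>p\<in>F. c p * p k)}"

definition e_set :: "nat \<Rightarrow> nat set \<Rightarrow> nat \<Rightarrow> real" where
  "e_set n B = (\<lambda>k. if k \<in> B \<inter> {1..n} then 1 else 0)"

definition piphi :: "nat \<Rightarrow> nat list \<Rightarrow> (nat \<Rightarrow> nat) \<Rightarrow> nat \<Rightarrow> real" where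
  "piphi n d x = (\<lambda>k. if k \<in> {1..n} then real (card {j. j < length d \<and> x k \<ge> n + 1 - d ! j}) else 0)"

definition pipsi :: "nat \<Rightarrow> nat list \<Rightarrow> (nat \<Rightarrow> nat) \<Rightarrow> nat \<Rightarrow> real" where
  "pipsi n d x = (\<lambda>k. \<Sum>j<length d. e_set n (x ` {1..d ! j}) k)"

definition BI_gen :: "nat \<Rightarrow> ((nat \<Rightarrow> nat) \<Rightarrow> nat \<Rightarrow> real) \<Rightarrow> ((nat \<Rightarrow> nat) \<times> (nat \<Rightarrow> nat)) set" where
  "BI_gen n f = {(u, v). u \<in> Sym n \<and> v \<in> Sym n \<and> bruhat_le n u v \<and>
      (\<forall>x\<in>Sym n. f x = f v \<and> bruhat_le n x v \<longrightarrow> x = v)}"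

definition BI :: "nat list \<Rightarrow> nat \<Rightarrow> ((nat \<Rightarrow> nat) \<times> (nat \<Rightarrow> nat)) set" where
  "BI d n = BI_gen n (piphi n d)"

definition BI_tw :: "nat list \<Rightarrow> nat \<Rightarrow> ((nat \<Rightarrow> nat) \<times> (nat \<Rightarrow> nat)) set" where
  "BI_tw d n = BI_gen n (pipsi n d)"

definition Q :: "nat list \<Rightarrow> nat \<Rightarrow> (nat \<Rightarrow> nat) \<Rightarrow> (nat \<Rightarrow> nat) \<Rightarrow> (nat \<Rightarrow> real) set" where
  "Q d n u v = conv (piphi n d ` bruhat_interval n u v)"

definition Q_tw :: "nat list \<Rightarrow> nat \<Rightarrow> (nat \<Rightarrow> nat) \<Rightarrow> (nat \<Rightarrow> nat) \<Rightarrow> (nat \<Rightarrow> real) set" where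
  "Q_tw d n u v = conv (pipsi n d ` bruhat_interval n u v)"

end

theory Submission
  imports Defs
begin

lemma tau_simps[simp]: "tau i i = Suc i" "tau i (Suc i) = i"
  "t \<noteq> i \<Longrightarrow> t \<noteq> Suc i \<Longrightarrow> tau i t = t"
  unfolding tau_def by (auto simp: transpose_def)

lemma tau_tau[simp]: "tau i (tau i t) = t"
  unfolding tau_def by (auto simp: transpose_def)

lemma tau_comp_tau[simp]: "x \<circ> tau i \<circ> tau i = x"
  by (simp add: fun_eq_iff)

lemma Sym_iff: "x \<in> Sym n \<longleftrightarrow> x permutes {1..n}"
  by (simp add: Sym_def)

lemma tau_Sym: "1 \<le> i \<Longrightarrow> i < n \<Longrightarrow> tau i \<in> Sym n"
  unfolding Sym_iff tau_def by (intro permutes_swap_id) auto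

lemma Sym_comp: "x \<in> Sym n \<Longrightarrow> y \<in> Sym n \<Longrightarrow> x \<circ> y \<in> Sym n"
  unfolding Sym_iff by (rule permutes_compose)

lemma Sym_tau: "x \<in> Sym n \<Longrightarrow> 1 \<le> i \<Longrightarrow> i < n \<Longrightarrow> x \<circ> tau i \<in> Sym n"
  by (simp add: Sym_comp tau_Sym)

lemma Sym_id[simp]: "id \<in> Sym n"
  unfolding Sym_iff by (rule permutes_id)

lemma Sym_in: "x \<in> Sym n \<Longrightarrow> t \<in> {1..n} \<Longrightarrow> x t \<in> {1..n}"
  using permutes_in_image[of x "{1..n}" t] by (simp add: Sym_iff)

lemma Sym_out: "x \<in> Sym n \<Longrightarrow> t \<notin> {1..n} \<Longrightarrow> x t = t"
  unfolding Sym_iff by (simp add: permutes_not_in)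

lemma Sym_inj: "x \<in> Sym n \<Longrightarrow> inj x"
  unfolding Sym_iff by (rule permutes_inj)

lemma foldr_gen: "foldr (\<lambda>i f. tau i \<circ> f) w g = word_prod w \<circ> g"
  by (induct w) (auto simp: word_prod_def)

lemma word_prod_Nil[simp]: "word_prod [] = id"
  by (simp add: word_prod_def)

lemma word_prod_snoc: "word_prod (w @ [a]) = word_prod w \<circ> tau a"
  using foldr_gen[of w "tau a"] by (simp add: word_prod_def)

lemma word_prod_Sym: "set w \<subseteq> {1..<n} \<Longrightarrow> word_prod w \<in> Sym n"
proof (induct w rule: rev_induct)
  case Nil then show ?case by (simp only: word_prod_Nil Sym_id)
next
  case (snoc a w)
  have w: "word_prod w \<in> Sym n" using snoc by simp
  have "1 \<le> a" "a < n" using snoc.prems by auto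
  then show ?case unfolding word_prod_snoc by (rule Sym_tau[OF w])
qed

definition N :: "nat \<Rightarrow> (nat \<Rightarrow> nat) \<Rightarrow> nat \<Rightarrow> nat \<Rightarrow> nat" where
  "N n x p k = card {t\<in>{1..n}. t \<le> p \<and> x t \<le> k}"

definition tle :: "nat \<Rightarrow> (nat \<Rightarrow> nat) \<Rightarrow> (nat \<Rightarrow> nat) \<Rightarrow> bool" where
  "tle n u v \<longleftrightarrow> (\<forall>p k. N n v p k \<le> N n u p k)"

lemma tle_refl: "tle n x x" by (simp add: tle_def)
lemma tle_trans: "tle n x y \<Longrightarrow> tle n y z \<Longrightarrow> tle n x z"
  unfolding tle_def using le_trans by blast

lemma N_0[simp]: "N n x 0 k = 0"
  unfolding N_def by auto

lemma N_step: assumes "1 \<le> p" "p \<le> n"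
  shows "N n x p k = N n x (p - 1) k + (if x p \<le> k then 1 else 0)"
proof -
  have "{t\<in>{1..n}. t \<le> p \<and> x t \<le> k} = {t\<in>{1..n}. t \<le> p - 1 \<and> x t \<le> k} \<union> (if x p \<le> k then {p} else {})"
    using assms by (intro set_eqI, case_tac "xa = p") auto
  then show ?thesis unfolding N_def by (auto simp: card_insert_if)
qed

lemma N_swap: assumes "1 \<le> i" "i < n" "p \<noteq> i"
  shows "N n (x \<circ> tau i) p k = N n x p k"
proof -
  have "{t\<in>{1..n}. t \<le> p \<and> (x \<circ> tau i) t \<le> k} = tau i ` {t\<in>{1..n}. t \<le> p \<and> x t \<le> k}"
  proof (rule set_eqI, rule iffI)
    fix y assume y: "y \<in> {t\<in>{1..n}. t \<le> p \<and> (x \<circ> tau i) t \<le> k}"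
    have "tau i y \<in> {t\<in>{1..n}. t \<le> p \<and> x t \<le> k}"
      using y assms by (cases "y = i"; cases "y = Suc i") auto
    then show "y \<in> tau i ` {t\<in>{1..n}. t \<le> p \<and> x t \<le> k}"
      by (metis tau_tau image_eqI)
  next
    fix y assume "y \<in> tau i ` {t\<in>{1..n}. t \<le> p \<and> x t \<le> k}"
    then obtain z where z: "z \<in> {t\<in>{1..n}. t \<le> p \<and> x t \<le> k}" "y = tau i z" by auto
    then show "y \<in> {t\<in>{1..n}. t \<le> p \<and> (x \<circ> tau i) t \<le> k}"
      using assms by (cases "z = i"; cases "z = Suc i") auto
  qed
  moreover have "inj (tau i)" by (metis tau_tau injI)
  ultimately show ?thesis unfolding N_def by (simp add: card_image inj_on_subset)
qed

lemma N_tau_i: assumes "1 \<le> i" "i < n"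
  shows "N n (x \<circ> tau i) i k = N n x (i - 1) k + (if x (Suc i) \<le> k then 1 else 0)"
  using N_step[of i n "x \<circ> tau i" k] N_swap[of i n "i - 1" x k] assms by simp

lemma N_i: assumes "1 \<le> i" "i < n"
  shows "N n x i k = N n x (i - 1) k + (if x i \<le> k then 1 else 0)"
  using N_step[of i n x k] assms by simp

lemma N_Suc_i: assumes "1 \<le> i" "i < n"
  shows "N n x (Suc i) k = N n x (i - 1) k + (if x i \<le> k then 1 else 0) + (if x (Suc i) \<le> k then 1 else 0)"
  using N_step[of "Suc i" n x k] N_step[of i n x k] assms by simp

lemma tle_tauI:
  assumes "1 \<le> i" "i < n"
    and "\<And>p k. p \<noteq> i \<Longrightarrow> N n v p k \<le> N n u p k"
    and "\<And>k. N n v i k \<le> N n u i k"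
  shows "tle n u v"
  unfolding tle_def using assms by (metis)

lemma M1: assumes "1 \<le> i" "i < n" "x i < x (Suc i)"
  shows "tle n x (x \<circ> tau i)"
proof (rule tle_tauI[OF assms(1,2)])
  fix p k assume "p \<noteq> i" then show "N n (x \<circ> tau i) p k \<le> N n x p k"
    using N_swap assms by simp
next
  fix k show "N n (x \<circ> tau i) i k \<le> N n x i k"
    using N_tau_i[OF assms(1,2)] N_i[OF assms(1,2)] assms(3) by simp
qed

lemma L3: assumes "1 \<le> i" "i < n" "tle n u v" "v i < v (Suc i)"
  shows "tle n (u \<circ> tau i) (v \<circ> tau i)"
proof (rule tle_tauI[OF assms(1,2)])
  fix p k assume "p \<noteq> i" then show "N n (v \<circ> tau i) p k \<le> N n (u \<circ> tau i) p k"
    using N_swap assms tle_def by simp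
next
  fix k
  have a: "N n v (i - 1) k \<le> N n u (i - 1) k" "N n v i k \<le> N n u i k" "N n v (Suc i) k \<le> N n u (Suc i) k"
    using assms(3) tle_def by auto
  show "N n (v \<circ> tau i) i k \<le> N n (u \<circ> tau i) i k"
    using a N_tau_i[OF assms(1,2)] N_i[OF assms(1,2)] N_Suc_i[OF assms(1,2)] assms(4)
    by (simp split: if_splits)
qed

lemma L2: assumes "1 \<le> i" "i < n" "tle n u v" "v (Suc i) < v i" "u i < u (Suc i)"
  shows "tle n u (v \<circ> tau i)"
proof (rule tle_tauI[OF assms(1,2)])
  fix p k assume "p \<noteq> i" then show "N n (v \<circ> tau i) p k \<le> N n u p k"
    using N_swap assms tle_def by simp
next
  fix k
  have a: "N n v (i - 1) k \<le> N n u (i - 1) k" "N n v i k \<le> N n u i k" "N n v (Suc i) k \<le> N n u (Suc i) k"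
    using assms(3) tle_def by auto
  show "N n (v \<circ> tau i) i k \<le> N n u i k"
    using a N_tau_i[OF assms(1,2)] N_i[OF assms(1,2)] N_Suc_i[OF assms(1,2)] assms(4,5)
    by (simp split: if_splits)
qed

lemma L1: assumes "1 \<le> i" "i < n" "tle n u v" "v (Suc i) < v i" "u (Suc i) < u i"
  shows "tle n (u \<circ> tau i) (v \<circ> tau i)"
proof -
  have "tle n (u \<circ> tau i) u" using M1[OF assms(1,2), of "u \<circ> tau i"] assms(5) by simp
  then have "tle n (u \<circ> tau i) v" using assms(3) tle_trans by blast
  then show ?thesis using L2[OF assms(1,2) _ assms(4)] assms(5) by simp
qed

lemma L4: assumes "1 \<le> i" "i < n" "tle n a y" "a i < a (Suc i)" "y (Suc i) < y i"
  shows "tle n (a \<circ> tau i) y"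
proof -
  have "tle n a (y \<circ> tau i)" using L2 assms by blast
  then show ?thesis using L3[OF assms(1,2), of a "y \<circ> tau i"] assms(5) by simp
qed

lemma Sym_ne: "x \<in> Sym n \<Longrightarrow> x i \<noteq> x (Suc i)"
  using Sym_inj by (metis injD n_not_Suc_n)

definition invs :: "nat \<Rightarrow> (nat \<Rightarrow> nat) \<Rightarrow> nat" where
  "invs n x = card {(a, b). a \<in> {1..n} \<and> b \<in> {1..n} \<and> a < b \<and> x b < x a}"

lemma tau_lt: "a < b \<Longrightarrow> (a, b) \<noteq> (i, Suc i) \<Longrightarrow> tau i a < tau i b"
  by (cases "a = i"; cases "a = Suc i"; cases "b = i"; cases "b = Suc i") auto

lemma tau_in: "1 \<le> i \<Longrightarrow> i < n \<Longrightarrow> a \<in> {1..n} \<Longrightarrow> tau i a \<in> {1..n}"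
  by (cases "a = i"; cases "a = Suc i") auto

lemma invs_desc: assumes "1 \<le> i" "i < n" "x (Suc i) < x i"
  shows "invs n (x \<circ> tau i) + 1 = invs n x"
proof -
  define I where "I y = {(a, b). a \<in> {1..n} \<and> b \<in> {1..n} \<and> a < b \<and> y b < y a}" for y :: "nat \<Rightarrow> nat"
  define g where "g = (\<lambda>(a, b). (tau i a, tau i b))"
  have fin: "finite (I y)" for y
    by (rule finite_subset[of _ "{1..n} \<times> {1..n}"]) (auto simp: I_def)
  have inj: "inj g"
  proof (rule injI)
    fix p q assume "g p = g q"
    then have "tau i (fst p) = tau i (fst q)" "tau i (snd p) = tau i (snd q)"
      by (auto simp: g_def split: prod.splits)
    then have "fst p = fst q" "snd p = snd q" by (metis tau_tau)+
    then show "p = q" by (simp add: prod_eq_iff)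
  qed
  have mem: "(i, Suc i) \<in> I x" using assms by (auto simp: I_def)
  have eq: "I (x \<circ> tau i) = g ` (I x - {(i, Suc i)})"
  proof (rule set_eqI, rule iffI)
    fix ab assume ab: "ab \<in> I (x \<circ> tau i)"
    obtain a b where abd: "ab = (a, b)" by fastforce
    from ab abd have a: "a \<in> {1..n}" "b \<in> {1..n}" "a < b" "x (tau i b) < x (tau i a)"
      by (auto simp: I_def)
    have ne: "(a, b) \<noteq> (i, Suc i)"
    proof
      assume "(a, b) = (i, Suc i)"
      then show False using a(4) assms(3) by auto
    qed
    have lt: "tau i a < tau i b" by (rule tau_lt[OF a(3) ne])
    have ne2: "(tau i a, tau i b) \<noteq> (i, Suc i)"
    proof
      assume h: "(tau i a, tau i b) = (i, Suc i)"
      then have "tau i (tau i a) = tau i i" "tau i (tau i b) = tau i (Suc i)" by auto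
      then have "a = Suc i" "b = i" by simp_all
      then show False using a(3) by simp
    qed
    have "(tau i a, tau i b) \<in> I x"
      unfolding I_def using a lt tau_in[OF assms(1,2)] by auto
    then have "(tau i a, tau i b) \<in> I x - {(i, Suc i)}" using ne2 by blast
    moreover have "ab = g (tau i a, tau i b)" using abd by (simp add: g_def)
    ultimately show "ab \<in> g ` (I x - {(i, Suc i)})" by blast
  next
    fix ab assume "ab \<in> g ` (I x - {(i, Suc i)})"
    then obtain a b where ab: "(a, b) \<in> I x" "(a, b) \<noteq> (i, Suc i)" "ab = (tau i a, tau i b)"
      by (auto simp: g_def)
    have "a \<in> {1..n}" "b \<in> {1..n}" "a < b" "x b < x a" using ab(1) by (auto simp: I_def)
    then show "ab \<in> I (x \<circ> tau i)"
      using ab(3) tau_lt[OF _ ab(2)] tau_in[OF assms(1,2)] by (auto simp: I_def)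
  qed
  have "invs n (x \<circ> tau i) = card (I x - {(i, Suc i)})"
    unfolding invs_def I_def[symmetric] eq by (rule card_image) (rule inj_on_subset[OF inj], simp)
  also have "\<dots> = card (I x) - 1" using mem fin by simp
  finally have e1: "invs n (x \<circ> tau i) = card (I x) - 1" .
  have "card (I x) > 0" using mem fin card_gt_0_iff by blast
  moreover have "invs n x = card (I x)" by (simp add: invs_def I_def)
  ultimately show ?thesis using e1 by simp
qed

lemma invs_asc: assumes "1 \<le> i" "i < n" "x i < x (Suc i)"
  shows "invs n (x \<circ> tau i) = invs n x + 1"
  using invs_desc[OF assms(1,2), of "x \<circ> tau i"] assms(3) by simp

lemma invs_tau_le: assumes "x \<in> Sym n" "1 \<le> i" "i < n"
  shows "invs n (x \<circ> tau i) \<le> invs n x + 1"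
  using invs_desc[OF assms(2,3), of x] invs_asc[OF assms(2,3), of x] Sym_ne[OF assms(1), of i]
  by (cases "x i < x (Suc i)") auto

lemma le_id: assumes "x \<in> Sym n" "\<forall>t\<in>{1..n}. x t \<le> t" shows "x = id"
proof -
  have "\<forall>t. t \<in> {1..n} \<longrightarrow> x t = t"
  proof (rule allI, induct_tac t rule: less_induct)
    fix t assume IH: "\<And>s. s < t \<Longrightarrow> s \<in> {1..n} \<longrightarrow> x s = s"
    show "t \<in> {1..n} \<longrightarrow> x t = t"
    proof
      assume t: "t \<in> {1..n}"
      show "x t = t"
      proof (rule ccontr)
        assume "x t \<noteq> t"
        moreover have "x t \<le> t" using assms(2) t by blast
        ultimately have "x t < t" by simp
        moreover have "x t \<in> {1..n}" using Sym_in[OF assms(1) t] .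
        ultimately have "x (x t) = x t" using IH by blast
        then show False using Sym_inj[OF assms(1)] \<open>x t \<noteq> t\<close> by (metis injD)
      qed
    qed
  qed
  then show ?thesis using Sym_out[OF assms(1)] by (metis eq_id_iff)
qed

lemma Sym_inv: "x \<in> Sym n \<Longrightarrow> inv x \<in> Sym n"
  unfolding Sym_iff by (rule permutes_inv)

lemma Sym_inv_app[simp]: "x \<in> Sym n \<Longrightarrow> inv x (x t) = t" "x \<in> Sym n \<Longrightarrow> x (inv x t) = t"
  unfolding Sym_iff by (simp_all add: permutes_inverses)

lemma noasc_id: assumes "x \<in> Sym n" "\<forall>i. 1 \<le> i \<and> i < n \<longrightarrow> x i < x (Suc i)"
  shows "x = id"
proof -
  have ge: "\<forall>t. t \<in> {1..n} \<longrightarrow> t \<le> x t"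
  proof
    fix t show "t \<in> {1..n} \<longrightarrow> t \<le> x t"
    proof (induct t)
      case 0 then show ?case by simp
    next
      case (Suc t)
      show ?case
      proof
        assume st: "Suc t \<in> {1..n}"
        show "Suc t \<le> x (Suc t)"
        proof (cases "t = 0")
          case True then show ?thesis using Sym_in[OF assms(1) st] by simp
        next
          case False
          then have t: "t \<in> {1..n}" "1 \<le> t" "t < n" using st by auto
          have "t \<le> x t" using Suc t(1) by blast
          moreover have "x t < x (Suc t)" using assms(2) t(2,3) by blast
          ultimately show ?thesis by simp
        qed
      qed
    qed
  qed
  have "inv x = id"
  proof (rule le_id[OF Sym_inv[OF assms(1)]], rule ballI)
    fix m assume m: "m \<in> {1..n}"
    have "inv x m \<in> {1..n}" using Sym_in[OF Sym_inv[OF assms(1)] m] .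
    then have "inv x m \<le> x (inv x m)" using ge by blast
    then show "inv x m \<le> m" using assms(1) by simp
  qed
  then have "x t = t" for t using Sym_inv_app(1)[OF assms(1), of t] by (metis id_apply)
  then show ?thesis by (simp add: fun_eq_iff)
qed

lemma tle_id: assumes "u \<in> Sym n" "tle n u id" shows "u = id"
proof (rule le_id[OF assms(1)], rule ballI)
  fix t assume t: "t \<in> {1..n}"
  have e: "{s\<in>{1..n}. s \<le> t \<and> id s \<le> t} = {1..t}" using t by (auto simp: id_def)
  have "N n id t t = card {1..t}" unfolding N_def by (simp only: e)
  then have "N n id t t = t" by simp
  moreover have "N n id t t \<le> N n u t t" using assms(2) unfolding tle_def by blast
  ultimately have c: "card {1..t} \<le> card {s\<in>{1..n}. s \<le> t \<and> u s \<le> t}" unfolding N_def by simp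
  have sub: "{s\<in>{1..n}. s \<le> t \<and> u s \<le> t} \<subseteq> {1..t}" by auto
  have eq: "{s\<in>{1..n}. s \<le> t \<and> u s \<le> t} = {1..t}"
    by (rule card_seteq[OF _ sub c]) simp
  have "t \<in> {1..t}" using t by simp
  then have "t \<in> {s\<in>{1..n}. s \<le> t \<and> u s \<le> t}" by (simp only: eq)
  then show "u t \<le> t" by simp
qed

lemma invs_id: "invs n id = 0"
proof -
  have "{(a, b). a \<in> {1..n} \<and> b \<in> {1..n} \<and> a < b \<and> id b < id a} = {}" (is "?S = _") by auto
  then show ?thesis unfolding invs_def by (metis card.empty)
qed

lemma subseq_set: assumes "subseq xs ys" shows "set xs \<subseteq> set ys"
proof
  fix x assume "x \<in> set xs"
  with assms obtain y where "y \<in> set ys" "x = y" by (rule list_emb_set)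
  then show "x \<in> set ys" by simp
qed

lemma word_exists: "x \<in> Sym n \<Longrightarrow> \<exists>w. set w \<subseteq> {1..<n} \<and> word_prod w = x \<and> length w = invs n x"
proof (induct "invs n x" arbitrary: x rule: less_induct)
  case less
  show ?case
  proof (cases "\<exists>i. 1 \<le> i \<and> i < n \<and> x (Suc i) < x i")
    case True
    then obtain i where i: "1 \<le> i" "i < n" "x (Suc i) < x i" by blast
    have xs: "x \<circ> tau i \<in> Sym n" using Sym_tau less.prems i by blast
    have d: "invs n (x \<circ> tau i) + 1 = invs n x" using invs_desc[OF i] .
    obtain w where w: "set w \<subseteq> {1..<n}" "word_prod w = x \<circ> tau i" "length w = invs n (x \<circ> tau i)"
      using less.hyps[OF _ xs] d by force
    show ?thesis
      by (rule exI[of _ "w @ [i]"]) (use w i d in \<open>auto simp: word_prod_snoc\<close>)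
  next
    case False
    then have "x = id" using noasc_id[OF less.prems] Sym_ne[OF less.prems] by (meson linorder_neqE_nat)
    moreover have "invs n id = 0" by (rule invs_id)
    ultimately show ?thesis by (intro exI[of _ "[]"]) simp
  qed
qed

lemma invs_word: "set w \<subseteq> {1..<n} \<Longrightarrow> invs n (word_prod w) \<le> length w"
proof (induct w rule: rev_induct)
  case Nil then show ?case using invs_id[of n] by (simp add: id_def)
next
  case (snoc a w)
  have a: "1 \<le> a" "a < n" and ws: "set w \<subseteq> {1..<n}" using snoc.prems by auto
  have "invs n (word_prod (w @ [a])) = invs n (word_prod w \<circ> tau a)" by (simp only: word_prod_snoc)
  then show ?case using invs_tau_le[OF word_prod_Sym[OF ws] a] snoc.hyps[OF ws] by simp
qed

lemma reduced_len: assumes "reduced_word n w v" shows "length w = invs n v" "v \<in> Sym n"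
proof -
  have iw: "set w \<subseteq> {1..<n}" "word_prod w = v" using assms by (auto simp: reduced_word_def is_word_def)
  then show vs: "v \<in> Sym n" using word_prod_Sym by blast
  obtain w' where "set w' \<subseteq> {1..<n}" "word_prod w' = v" "length w' = invs n v"
    using word_exists[OF vs] by blast
  then have "length w \<le> invs n v" using assms by (auto simp: reduced_word_def is_word_def)
  moreover have "invs n v \<le> length w" using invs_word[OF iw(1)] iw(2) by simp
  ultimately show "length w = invs n v" by simp
qed

lemma reduced_intro: assumes "set w \<subseteq> {1..<n}" "word_prod w = v" "length w = invs n v"
  shows "reduced_word n w v"
  unfolding reduced_word_def is_word_def using assms invs_word by fastforce

lemma forward: "set w \<subseteq> {1..<n} \<Longrightarrow> invs n (word_prod w) = length w \<Longrightarrow> subseq w' w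
  \<Longrightarrow> tle n (word_prod w') (word_prod w)"
proof (induct w arbitrary: w' rule: rev_induct)
  case Nil then have "w' = []" by simp
  then show ?case by (simp add: tle_refl)
next
  case (snoc a w)
  define x where "x = word_prod w"
  have ws: "set w \<subseteq> {1..<n}" and a: "1 \<le> a" "a < n" using snoc.prems by auto
  have xs: "x \<in> Sym n" using word_prod_Sym[OF ws] x_def by simp
  have le: "invs n x \<le> length w" using invs_word[OF ws] x_def by simp
  have e: "invs n (x \<circ> tau a) = length w + 1" using snoc.prems(2) by (simp add: word_prod_snoc x_def comp_def)
  have asc: "x a < x (Suc a)"
  proof (rule ccontr)
    assume "\<not> x a < x (Suc a)"
    then have "x (Suc a) < x a" using Sym_ne[OF xs, of a] by simp
    then show False using invs_desc[OF a, of x] e le by simp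
  qed
  have ix: "invs n x = length w" using invs_asc[OF a asc] e by simp
  obtain xs1 xs2 where sp: "w' = xs1 @ xs2" "subseq xs1 w" "subseq xs2 [a]"
    using snoc.prems(3) by (auto elim: subseq_appendE)
  have IH: "tle n (word_prod xs1) x" using snoc.hyps[OF ws _ sp(2)] ix x_def by simp
  have dj: "xs2 = [] \<or> xs2 = [a]" using sp(3) by (cases xs2) (auto split: if_splits dest: list_emb_Nil2)
  have wa: "word_prod (w @ [a]) = x \<circ> tau a" by (simp only: word_prod_snoc x_def)
  from dj show ?case
  proof
    assume "xs2 = []"
    then have "w' = xs1" using sp(1) by simp
    then show ?thesis unfolding wa by (simp only: tle_trans[OF IH M1[OF a asc]])
  next
    assume "xs2 = [a]"
    then have "word_prod w' = word_prod xs1 \<circ> tau a" using sp(1) by (simp only: word_prod_snoc)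
    then show ?thesis unfolding wa by (simp only: L3[OF a IH asc])
  qed
qed

lemma backward: "u \<in> Sym n \<Longrightarrow> v \<in> Sym n \<Longrightarrow> tle n u v \<Longrightarrow>
  \<exists>w. reduced_word n w v \<and> (\<exists>w'. subseq w' w \<and> word_prod w' = u)"
proof (induct "invs n v" arbitrary: u v rule: less_induct)
  case less
  show ?case
  proof (cases "\<exists>i. 1 \<le> i \<and> i < n \<and> v (Suc i) < v i")
    case True
    then obtain i where i: "1 \<le> i" "i < n" "v (Suc i) < v i" by blast
    have vs: "v \<circ> tau i \<in> Sym n" using Sym_tau less.prems i by blast
    have d: "invs n (v \<circ> tau i) + 1 = invs n v" using invs_desc[OF i] .
    show ?thesis
    proof (cases "u (Suc i) < u i")
      case True
      have us: "u \<circ> tau i \<in> Sym n" using Sym_tau less.prems i by blast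
      have "tle n (u \<circ> tau i) (v \<circ> tau i)" using L1[OF i(1,2) less.prems(3) i(3) True] .
      then obtain w w' where w: "reduced_word n w (v \<circ> tau i)" "subseq w' w" "word_prod w' = u \<circ> tau i"
        using less.hyps[OF _ us vs] d by force
      have "reduced_word n (w @ [i]) v"
        using reduced_len[OF w(1)] w(1) i d
        by (intro reduced_intro) (auto simp: reduced_word_def is_word_def word_prod_snoc)
      moreover have "subseq (w' @ [i]) (w @ [i])" "word_prod (w' @ [i]) = u"
        using w by (auto simp: word_prod_snoc)
      ultimately show ?thesis by blast
    next
      case False
      then have ua: "u i < u (Suc i)" using Sym_ne[OF less.prems(1), of i] by simp
      have "tle n u (v \<circ> tau i)" using L2[OF i(1,2) less.prems(3) i(3) ua] .
      then obtain w w' where w: "reduced_word n w (v \<circ> tau i)" "subseq w' w" "word_prod w' = u"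
        using less.hyps[OF _ less.prems(1) vs] d by force
      have "reduced_word n (w @ [i]) v"
        using reduced_len[OF w(1)] w(1) i d
        by (intro reduced_intro) (auto simp: reduced_word_def is_word_def word_prod_snoc)
      moreover have "subseq w' (w @ [i])" using w(2) by (rule subseq_rev_drop_many)
      ultimately show ?thesis using w(3) by blast
    qed
  next
    case False
    then have v: "v = id" using noasc_id[OF less.prems(2)] Sym_ne[OF less.prems(2)] by (meson linorder_neqE_nat)
    then have u: "u = id" using tle_id less.prems by simp
    have "reduced_word n [] id" by (rule reduced_intro) (auto simp: invs_id)
    then show ?thesis using u v by (intro exI[of _ "[]"]) auto
  qed
qed

lemma bruhat_iff: "bruhat_le n u v \<longleftrightarrow> u \<in> Sym n \<and> v \<in> Sym n \<and> tle n u v"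
proof
  assume "bruhat_le n u v"
  then obtain w w' where w: "reduced_word n w v" "subseq w' w" "word_prod w' = u"
    unfolding bruhat_le_def by blast
  have ws: "set w \<subseteq> {1..<n}" "word_prod w = v" using w(1) by (auto simp: reduced_word_def is_word_def)
  have "set w' \<subseteq> {1..<n}" using ws(1) w(2) using subseq_set by blast
  then have "u \<in> Sym n" using word_prod_Sym w(3) by blast
  moreover have "v \<in> Sym n" using reduced_len(2)[OF w(1)] .
  moreover have "tle n u v" using forward[OF ws(1) _ w(2)] reduced_len(1)[OF w(1)] ws(2) w(3) by simp
  ultimately show "u \<in> Sym n \<and> v \<in> Sym n \<and> tle n u v" by blast
next
  assume "u \<in> Sym n \<and> v \<in> Sym n \<and> tle n u v"
  then show "bruhat_le n u v" unfolding bruhat_le_def using backward by blast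
qed

lemma Sym_bij: "x \<in> Sym n \<Longrightarrow> bij x"
  unfolding Sym_iff by (rule permutes_bij)

lemma inv_inv_Sym[simp]: "x \<in> Sym n \<Longrightarrow> inv (inv x) = x"
  using Sym_bij inv_inv_eq by blast

lemma cnt_img: assumes "y \<in> Sym n"
  shows "card {t\<in>{1..n}. P t \<and> y t \<le> k} = card {m\<in>{1..n}. m \<le> k \<and> P (inv y m)}"
proof -
  have "{m\<in>{1..n}. m \<le> k \<and> P (inv y m)} = y ` {t\<in>{1..n}. P t \<and> y t \<le> k}"
  proof (rule set_eqI, rule iffI)
    fix m assume m: "m \<in> {m\<in>{1..n}. m \<le> k \<and> P (inv y m)}"
    then have "inv y m \<in> {t\<in>{1..n}. P t \<and> y t \<le> k}"
      using Sym_in[OF Sym_inv[OF assms]] assms by auto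
    moreover have "m = y (inv y m)" using assms by simp
    ultimately show "m \<in> y ` {t\<in>{1..n}. P t \<and> y t \<le> k}" by blast
  next
    fix m assume "m \<in> y ` {t\<in>{1..n}. P t \<and> y t \<le> k}"
    then obtain t where t: "t \<in> {1..n}" "P t" "y t \<le> k" "m = y t" by auto
    then show "m \<in> {m\<in>{1..n}. m \<le> k \<and> P (inv y m)}" using Sym_in[OF assms t(1)] assms by auto
  qed
  moreover have "inj_on y {t\<in>{1..n}. P t \<and> y t \<le> k}" using Sym_inj[OF assms] inj_on_subset by blast
  ultimately show ?thesis by (simp add: card_image)
qed

lemma N_inv: assumes "x \<in> Sym n" shows "N n (inv x) p k = N n x k p"
proof -
  have "N n x k p = card {m\<in>{1..n}. m \<le> p \<and> inv x m \<le> k}"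
    unfolding N_def using cnt_img[OF assms, of "\<lambda>t. t \<le> k" p] by simp
  then show ?thesis unfolding N_def by simp
qed

lemma tle_inv: assumes "u \<in> Sym n" "v \<in> Sym n" "tle n u v" shows "tle n (inv u) (inv v)"
  using assms unfolding tle_def by (simp add: N_inv)

lemma tle_inv_iff: assumes "u \<in> Sym n" "v \<in> Sym n" shows "tle n (inv u) (inv v) \<longleftrightarrow> tle n u v"
  using tle_inv[OF assms] tle_inv[OF Sym_inv[OF assms(1)] Sym_inv[OF assms(2)]] assms by auto

definition wz :: "nat \<Rightarrow> nat \<Rightarrow> nat" where
  "wz n t = (if t \<in> {1..n} then n + 1 - t else t)"

lemma wz_wz[simp]: "wz n (wz n t) = t"
  unfolding wz_def by auto

lemma wz_comp_wz[simp]: "f \<circ> wz n \<circ> wz n = f"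
  by (simp add: fun_eq_iff)

lemma wz_Sym: "wz n \<in> Sym n"
  unfolding Sym_iff
proof (rule inj_imp_permutes)
  show "inj_on (wz n) {1..n}" by (metis inj_onI wz_wz)
qed (auto simp: wz_def)

lemma N_total: assumes "x \<in> Sym n" "n \<le> p" shows "N n x p k = card {m\<in>{1..n}. m \<le> k}"
proof -
  have "N n x p k = card {t\<in>{1..n}. True \<and> x t \<le> k}"
    unfolding N_def using assms(2) by (intro arg_cong[where f = card]) auto
  also have "\<dots> = card {m\<in>{1..n}. m \<le> k}" using cnt_img[OF assms(1), of "\<lambda>t. True" k] by simp
  finally show ?thesis .
qed

lemma N_mono: "p \<le> q \<Longrightarrow> N n x p k \<le> N n x q k"
  unfolding N_def by (rule card_mono) auto

lemma wz_props: assumes "t \<in> {1..n}" "p \<le> n" shows "wz n t \<in> {1..n}" "n - p < wz n t \<longleftrightarrow> t \<le> p"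
  using assms unfolding wz_def by auto

lemma N_wz: assumes "x \<in> Sym n" "p \<le> n"
  shows "N n (x \<circ> wz n) p k + N n x (n - p) k = N n x n k"
proof -
  let ?S = "{s\<in>{1..n}. n - p < s \<and> x s \<le> k}"
  let ?L = "{t\<in>{1..n}. t \<le> p \<and> (x \<circ> wz n) t \<le> k}"
  have e1: "?L = wz n ` ?S"
  proof (rule set_eqI, rule iffI)
    fix t assume t: "t \<in> ?L"
    then have t1: "t \<in> {1..n}" "t \<le> p" "x (wz n t) \<le> k" by auto
    have "wz n t \<in> ?S" using wz_props[OF t1(1) assms(2)] t1 by blast
    moreover have "t = wz n (wz n t)" by simp
    ultimately show "t \<in> wz n ` ?S" by (rule rev_image_eqI)
  next
    fix t assume "t \<in> wz n ` ?S"
    then obtain s where s: "s \<in> {1..n}" "n - p < s" "x s \<le> k" "t = wz n s" by auto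
    have "wz n s \<in> {1..n}" "n - p < wz n (wz n s) \<longleftrightarrow> wz n s \<le> p"
      using wz_props[OF s(1) assms(2)] wz_props[OF _ assms(2), of "wz n s"] by blast+
    then show "t \<in> ?L" using s by simp
  qed
  have "inj_on (wz n) ?S" by (metis inj_onI wz_wz)
  then have c1: "N n (x \<circ> wz n) p k = card ?S" unfolding N_def e1 by (simp add: card_image)
  let ?A = "{t\<in>{1..n}. t \<le> n - p \<and> x t \<le> k}"
  have e2: "{t\<in>{1..n}. t \<le> n \<and> x t \<le> k} = ?A \<union> ?S" by auto
  have "card (?A \<union> ?S) = card ?A + card ?S"
    by (rule card_Un_disjoint) auto
  then show ?thesis using c1 e2 unfolding N_def by simp
qed

lemma tle_wz: assumes "u \<in> Sym n" "v \<in> Sym n" "tle n u v" shows "tle n (v \<circ> wz n) (u \<circ> wz n)"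
  unfolding tle_def
proof (intro allI)
  fix p k
  show "N n (u \<circ> wz n) p k \<le> N n (v \<circ> wz n) p k"
  proof (cases "p \<le> n")
    case True
    have "N n v (n - p) k \<le> N n u (n - p) k" using assms(3) tle_def by blast
    moreover have "N n u n k = N n v n k" using N_total assms by simp
    ultimately show ?thesis using N_wz[OF assms(1) True, of k] N_wz[OF assms(2) True, of k] by linarith
  next
    case False
    then show ?thesis using N_total[of "u \<circ> wz n" n p k] N_total[of "v \<circ> wz n" n p k]
      Sym_comp[OF assms(1) wz_Sym] Sym_comp[OF assms(2) wz_Sym] by simp
  qed
qed

definition sg :: "nat \<Rightarrow> (nat \<Rightarrow> nat) \<Rightarrow> nat \<Rightarrow> nat" where
  "sg n x = inv x \<circ> wz n"

lemma sg_Sym: "x \<in> Sym n \<Longrightarrow> sg n x \<in> Sym n"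
  unfolding sg_def by (intro Sym_comp Sym_inv wz_Sym)

lemma sg_tle_iff: assumes "a \<in> Sym n" "b \<in> Sym n"
  shows "tle n (sg n a) (sg n b) \<longleftrightarrow> tle n b a"
proof
  assume "tle n b a"
  then have "tle n (inv b) (inv a)" using tle_inv assms by blast
  then show "tle n (sg n a) (sg n b)" unfolding sg_def by (rule tle_wz[OF Sym_inv[OF assms(2)] Sym_inv[OF assms(1)]])
next
  assume "tle n (sg n a) (sg n b)"
  then have "tle n (sg n b \<circ> wz n) (sg n a \<circ> wz n)" by (rule tle_wz[OF sg_Sym[OF assms(1)] sg_Sym[OF assms(2)]])
  then have "tle n (inv b \<circ> wz n \<circ> wz n) (inv a \<circ> wz n \<circ> wz n)" unfolding sg_def .
  then have "tle n (inv b) (inv a)" by simp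
  then show "tle n b a" using tle_inv_iff[OF assms(2) assms(1)] by blast
qed

lemma sg_inv: assumes "y \<in> Sym n" shows "inv (y \<circ> wz n) \<in> Sym n" "sg n (inv (y \<circ> wz n)) = y"
proof -
  show s: "inv (y \<circ> wz n) \<in> Sym n" by (rule Sym_inv[OF Sym_comp[OF assms wz_Sym]])
  have "y \<circ> wz n \<in> Sym n" using Sym_comp[OF assms wz_Sym] .
  then have "inv (inv (y \<circ> wz n)) = y \<circ> wz n" by (rule inv_inv_Sym)
  then show "sg n (inv (y \<circ> wz n)) = y" unfolding sg_def by simp
qed

lemma inv_wz: "inv (wz n) = wz n"
  by (rule inv_unique_comp) (simp_all add: fun_eq_iff)

lemma inv_sg: assumes "x \<in> Sym n" shows "inv (sg n x) = wz n \<circ> x"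
proof -
  have "inv (sg n x) = inv (wz n) \<circ> inv (inv x)"
    unfolding sg_def by (rule o_inv_distrib[OF Sym_bij[OF Sym_inv[OF assms]] Sym_bij[OF wz_Sym]])
  then show ?thesis using assms inv_wz by simp
qed

lemma pipsi_alt: assumes "y \<in> Sym n"
  shows "pipsi n d y k = (if k \<in> {1..n} then real (card {j. j < length d \<and> inv y k \<le> d ! j}) else 0)"
proof (cases "k \<in> {1..n}")
  case True
  have iff: "k \<in> y ` {1..D} \<longleftrightarrow> inv y k \<le> D" for D
  proof
    assume "k \<in> y ` {1..D}" then obtain t where "t \<in> {1..D}" "k = y t" by auto
    then show "inv y k \<le> D" using assms by simp
  next
    assume "inv y k \<le> D"
    moreover have "inv y k \<in> {1..n}" using Sym_in[OF Sym_inv[OF assms] True] .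
    ultimately have m: "inv y k \<in> {1..D}" by simp
    have "k = y (inv y k)" using assms by simp
    then show "k \<in> y ` {1..D}" using m by (rule image_eqI)
  qed
  have es: "e_set n (y ` {1..D}) k = of_bool (inv y k \<le> D)" for D
    unfolding e_set_def using iff True by simp
  have "pipsi n d y k = (\<Sum>j<length d. (of_bool (inv y k \<le> d ! j) :: real))"
    unfolding pipsi_def using es by simp
  also have "\<dots> = real (card ({..<length d} \<inter> {j. inv y k \<le> d ! j}))" by simp
  also have "{..<length d} \<inter> {j. inv y k \<le> d ! j} = {j. j < length d \<and> inv y k \<le> d ! j}" by auto
  finally show ?thesis using True by simp
next
  case False
  have es: "e_set n B k = 0" for B unfolding e_set_def using False by simp
  have l: "pipsi n d y k = 0" unfolding pipsi_def using es by simp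
  show ?thesis using l by (simp only: if_not_P[OF False])
qed

lemma piphi_pipsi: assumes "x \<in> Sym n" shows "pipsi n d (sg n x) = piphi n d x"
proof
  fix k
  show "pipsi n d (sg n x) k = piphi n d x k"
  proof (cases "k \<in> {1..n}")
    case True
    have xk: "x k \<in> {1..n}" using Sym_in[OF assms True] .
    have "inv (sg n x) k = n + 1 - x k" using inv_sg[OF assms] xk by (simp add: wz_def)
    moreover have "{j. j < length d \<and> n + 1 - x k \<le> d ! j} = {j. j < length d \<and> x k \<ge> n + 1 - d ! j}"
      using xk by auto
    ultimately show ?thesis using True pipsi_alt[OF sg_Sym[OF assms]] by (simp add: piphi_def)
  next
    case False
    have "pipsi n d (sg n x) k = 0" by (simp only: pipsi_alt[OF sg_Sym[OF assms]] if_not_P[OF False])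
    moreover have "piphi n d x k = 0" unfolding piphi_def by (simp only: if_not_P[OF False])
    ultimately show ?thesis by simp
  qed
qed

definition iv :: "nat \<Rightarrow> (nat \<Rightarrow> nat) \<Rightarrow> (nat \<Rightarrow> nat) \<Rightarrow> (nat \<Rightarrow> nat) set" where
  "iv n u v = {x\<in>Sym n. tle n u x \<and> tle n x v}"

lemma img_swap: assumes "u \<in> Sym n" "v \<in> Sym n"
  shows "piphi n d ` iv n u v = pipsi n d ` iv n (sg n v) (sg n u)"
proof (rule set_eqI, rule iffI)
  fix z assume "z \<in> piphi n d ` iv n u v"
  then obtain x where x: "x \<in> Sym n" "tle n u x" "tle n x v" "z = piphi n d x" by (auto simp: iv_def)
  have "tle n (sg n v) (sg n x)" using sg_tle_iff[OF assms(2) x(1)] x(3) by blast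
  moreover have "tle n (sg n x) (sg n u)" using sg_tle_iff[OF x(1) assms(1)] x(2) by blast
  ultimately have "sg n x \<in> iv n (sg n v) (sg n u)" using sg_Sym[OF x(1)] by (simp add: iv_def)
  moreover have "z = pipsi n d (sg n x)" using x piphi_pipsi by simp
  ultimately show "z \<in> pipsi n d ` iv n (sg n v) (sg n u)" by blast
next
  fix z assume "z \<in> pipsi n d ` iv n (sg n v) (sg n u)"
  then obtain y where y: "y \<in> Sym n" "tle n (sg n v) y" "tle n y (sg n u)" "z = pipsi n d y"
    by (auto simp: iv_def)
  define x where "x = inv (y \<circ> wz n)"
  have xs: "x \<in> Sym n" "sg n x = y" using sg_inv[OF y(1)] x_def by auto
  have "tle n u x" using sg_tle_iff[OF xs(1) assms(1)] y(3) xs(2) by simp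
  have "tle n x v" using sg_tle_iff[OF assms(2) xs(1)] y(2) xs(2) by simp
  then have "x \<in> iv n u v" using xs \<open>tle n u x\<close> by (simp add: iv_def)
  moreover have "z = piphi n d x" using y(4) xs piphi_pipsi[OF xs(1)] by simp
  ultimately show "z \<in> piphi n d ` iv n u v" by blast
qed

lemma tau_i_app[simp]: "(x \<circ> tau i) i = x (Suc i)" "(x \<circ> tau i) (Suc i) = x i"
  by simp_all

lemma imgA:
  assumes i: "1 \<le> i" "i < n" and finv: "\<And>x. x \<in> Sym n \<Longrightarrow> f (x \<circ> tau i) = f x"
    and uv: "u \<in> Sym n" "v \<in> Sym n" "tle n u v" and vd: "v (Suc i) < v i" and ua: "u i < u (Suc i)"
  shows "f ` iv n u (v \<circ> tau i) = f ` iv n u v"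
proof (rule set_eqI, rule iffI)
  have vv: "tle n (v \<circ> tau i) v" using M1[OF i, of "v \<circ> tau i"] vd by simp
  fix z assume "z \<in> f ` iv n u (v \<circ> tau i)"
  then obtain x where x: "x \<in> Sym n" "tle n u x" "tle n x (v \<circ> tau i)" "z = f x" by (auto simp: iv_def)
  have "tle n x v" using tle_trans[OF x(3) vv] .
  then have "x \<in> iv n u v" using x by (simp add: iv_def)
  then show "z \<in> f ` iv n u v" using x(4) by blast
next
  fix z assume "z \<in> f ` iv n u v"
  then obtain x where x: "x \<in> Sym n" "tle n u x" "tle n x v" "z = f x" by (auto simp: iv_def)
  show "z \<in> f ` iv n u (v \<circ> tau i)"
  proof (cases "x i < x (Suc i)")
    case True
    have "tle n x (v \<circ> tau i)" using L2[OF i x(3) vd True] .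
    then have "x \<in> iv n u (v \<circ> tau i)" using x by (simp add: iv_def)
    then show ?thesis using x(4) by blast
  next
    case False
    then have xd: "x (Suc i) < x i" using Sym_ne[OF x(1), of i] by simp
    have "tle n (x \<circ> tau i) (v \<circ> tau i)" using L1[OF i x(3) vd xd] .
    moreover have "tle n u (x \<circ> tau i)" using L2[OF i x(2) xd ua] .
    ultimately have "x \<circ> tau i \<in> iv n u (v \<circ> tau i)" using Sym_tau[OF x(1) i] by (simp add: iv_def)
    moreover have "z = f (x \<circ> tau i)" using x(4) finv[OF x(1)] by simp
    ultimately show ?thesis by blast
  qed
qed

lemma imgB:
  assumes i: "1 \<le> i" "i < n" and finv: "\<And>x. x \<in> Sym n \<Longrightarrow> f (x \<circ> tau i) = f x"
    and uv: "u \<in> Sym n" "v \<in> Sym n" "tle n u v" and vd: "v (Suc i) < v i" and ud: "u (Suc i) < u i"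
  shows "f ` iv n (u \<circ> tau i) (v \<circ> tau i) = f ` iv n u v"
proof (rule set_eqI, rule iffI)
  have vv: "tle n (v \<circ> tau i) v" using M1[OF i, of "v \<circ> tau i"] vd by simp
  have ua: "(u \<circ> tau i) i < (u \<circ> tau i) (Suc i)" using ud by simp
  have va: "(v \<circ> tau i) i < (v \<circ> tau i) (Suc i)" using vd by simp
  fix z assume "z \<in> f ` iv n (u \<circ> tau i) (v \<circ> tau i)"
  then obtain y where y: "y \<in> Sym n" "tle n (u \<circ> tau i) y" "tle n y (v \<circ> tau i)" "z = f y"
    by (auto simp: iv_def)
  show "z \<in> f ` iv n u v"
  proof (cases "y i < y (Suc i)")
    case True
    have "tle n (y \<circ> tau i) (v \<circ> tau i \<circ> tau i)" using L3[OF i y(3) va] .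
    then have a: "tle n (y \<circ> tau i) v" by simp
    have "tle n (u \<circ> tau i \<circ> tau i) (y \<circ> tau i)" using L3[OF i y(2) True] .
    then have b: "tle n u (y \<circ> tau i)" by simp
    have "y \<circ> tau i \<in> iv n u v" using a b Sym_tau[OF y(1) i] by (simp add: iv_def)
    moreover have "z = f (y \<circ> tau i)" using y(4) finv[OF y(1)] by simp
    ultimately show ?thesis by blast
  next
    case False
    then have yd: "y (Suc i) < y i" using Sym_ne[OF y(1), of i] by simp
    have a: "tle n y v" using tle_trans[OF y(3) vv] .
    have "tle n (u \<circ> tau i \<circ> tau i) y" using L4[OF i y(2) ua yd] .
    then have b: "tle n u y" by simp
    have "y \<in> iv n u v" using a b y(1) by (simp add: iv_def)
    then show ?thesis using y(4) by blast
  qed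
next
  have uu: "tle n (u \<circ> tau i) u" using M1[OF i, of "u \<circ> tau i"] ud by simp
  fix z assume "z \<in> f ` iv n u v"
  then obtain x where x: "x \<in> Sym n" "tle n u x" "tle n x v" "z = f x" by (auto simp: iv_def)
  show "z \<in> f ` iv n (u \<circ> tau i) (v \<circ> tau i)"
  proof (cases "x i < x (Suc i)")
    case True
    have a: "tle n x (v \<circ> tau i)" using L2[OF i x(3) vd True] .
    have b: "tle n (u \<circ> tau i) x" using tle_trans[OF uu x(2)] .
    have "x \<in> iv n (u \<circ> tau i) (v \<circ> tau i)" using a b x(1) by (simp add: iv_def)
    then show ?thesis using x(4) by blast
  next
    case False
    then have xd: "x (Suc i) < x i" using Sym_ne[OF x(1), of i] by simp
    have a: "tle n (x \<circ> tau i) (v \<circ> tau i)" using L1[OF i x(3) vd xd] .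
    have b: "tle n (u \<circ> tau i) (x \<circ> tau i)" using L1[OF i x(2) xd ud] .
    have "x \<circ> tau i \<in> iv n (u \<circ> tau i) (v \<circ> tau i)" using a b Sym_tau[OF x(1) i] by (simp add: iv_def)
    moreover have "z = f (x \<circ> tau i)" using x(4) finv[OF x(1)] by simp
    ultimately show ?thesis by blast
  qed
qed

lemma reduction:
  fixes f :: "(nat \<Rightarrow> nat) \<Rightarrow> 'b" and \<beta> :: "nat \<Rightarrow> nat"
  assumes finv: "\<And>x i. x \<in> Sym n \<Longrightarrow> 1 \<le> i \<Longrightarrow> i < n \<Longrightarrow> \<beta> i = \<beta> (Suc i) \<Longrightarrow> f (x \<circ> tau i) = f x"
  shows "u \<in> Sym n \<Longrightarrow> v \<in> Sym n \<Longrightarrow> tle n u v \<Longrightarrow>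
    \<exists>u' v'. u' \<in> Sym n \<and> v' \<in> Sym n \<and> tle n u' v' \<and>
      (\<forall>i. 1 \<le> i \<and> i < n \<and> \<beta> i = \<beta> (Suc i) \<longrightarrow> v' i < v' (Suc i)) \<and> f ` iv n u' v' = f ` iv n u v"
proof (induct "invs n v" arbitrary: u v rule: less_induct)
  case less
  show ?case
  proof (cases "\<exists>i. 1 \<le> i \<and> i < n \<and> \<beta> i = \<beta> (Suc i) \<and> v (Suc i) < v i")
    case True
    then obtain i where i: "1 \<le> i" "i < n" "\<beta> i = \<beta> (Suc i)" "v (Suc i) < v i" by blast
    have fi: "\<And>x. x \<in> Sym n \<Longrightarrow> f (x \<circ> tau i) = f x" using finv i(1,2,3) by blast
    have vs: "v \<circ> tau i \<in> Sym n" using Sym_tau[OF less.prems(2) i(1,2)] .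
    have lt: "invs n (v \<circ> tau i) < invs n v" using invs_desc[OF i(1,2) i(4)] by simp
    show ?thesis
    proof (cases "u (Suc i) < u i")
      case True
      have us: "u \<circ> tau i \<in> Sym n" using Sym_tau[OF less.prems(1) i(1,2)] .
      have t: "tle n (u \<circ> tau i) (v \<circ> tau i)" using L1[OF i(1,2) less.prems(3) i(4) True] .
      have e: "f ` iv n (u \<circ> tau i) (v \<circ> tau i) = f ` iv n u v"
        by (rule imgB[where f=f, OF i(1,2) fi less.prems i(4) True])
      show ?thesis using less.hyps[OF lt us vs t] e by metis
    next
      case False
      then have ua: "u i < u (Suc i)" using Sym_ne[OF less.prems(1), of i] by simp
      have t: "tle n u (v \<circ> tau i)" using L2[OF i(1,2) less.prems(3) i(4) ua] .
      have e: "f ` iv n u (v \<circ> tau i) = f ` iv n u v"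
        by (rule imgA[where f=f, OF i(1,2) fi less.prems i(4) ua])
      show ?thesis using less.hyps[OF lt less.prems(1) vs t] e by metis
    qed
  next
    case False
    have "\<forall>i. 1 \<le> i \<and> i < n \<and> \<beta> i = \<beta> (Suc i) \<longrightarrow> v i < v (Suc i)"
    proof (intro allI impI)
      fix i assume "1 \<le> i \<and> i < n \<and> \<beta> i = \<beta> (Suc i)"
      then have "\<not> v (Suc i) < v i" using False by blast
      then show "v i < v (Suc i)" using Sym_ne[OF less.prems(2), of i] by simp
    qed
    then show ?thesis using less.prems by blast
  qed
qed

lemma block_incr:
  assumes mono: "\<And>a b. a \<le> b \<Longrightarrow> \<beta> a \<le> (\<beta> b :: nat)"
    and asc: "\<forall>i. 1 \<le> i \<and> i < n \<and> \<beta> i = \<beta> (Suc i) \<longrightarrow> v i < v (Suc i)"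
  shows "1 \<le> a \<Longrightarrow> a < b \<Longrightarrow> b \<le> n \<Longrightarrow> \<beta> a = \<beta> b \<Longrightarrow> v a < (v b :: nat)"
proof (induct b)
  case 0 then show ?case by simp
next
  case (Suc b)
  show ?case
  proof (cases "a = b")
    case True
    then show ?thesis using asc Suc.prems by auto
  next
    case False
    then have ab: "a < b" using Suc.prems by simp
    have "\<beta> a \<le> \<beta> b" "\<beta> b \<le> \<beta> (Suc b)" using mono ab by auto
    then have bb: "\<beta> b = \<beta> a" "\<beta> b = \<beta> (Suc b)" using Suc.prems by auto
    have "v a < v b" using Suc.hyps[OF Suc.prems(1) ab] Suc.prems(3) bb by simp
    moreover have "v b < v (Suc b)" using asc Suc.prems ab bb by auto
    ultimately show ?thesis by simp
  qed
qed

lemma minimal: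
  assumes mono: "\<And>a b. a \<le> b \<Longrightarrow> \<beta> a \<le> (\<beta> b :: nat)"
    and v: "v \<in> Sym n"
    and asc: "\<forall>i. 1 \<le> i \<and> i < n \<and> \<beta> i = \<beta> (Suc i) \<longrightarrow> v i < v (Suc i)"
    and x: "x \<in> Sym n"
    and fib: "\<forall>k\<in>{1..n}. \<beta> (inv x k) = \<beta> (inv v k)"
    and xv: "tle n x v"
  shows "x = v"
proof -
  have le: "N n x p k \<le> N n v p k" for p k
  proof (cases "p = 0")
    case True then show ?thesis by simp
  next
    case p0: False
    show ?thesis
    proof (cases "n \<le> p")
      case True then show ?thesis using N_total[OF x True] N_total[OF v True] by simp
    next
      case False
      then have p: "1 \<le> p" "p < n" using p0 by auto
      define A where "A = {t\<in>{1..n}. \<beta> t < \<beta> p}"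
      define Bp where "Bp = {t\<in>{1..n}. \<beta> t = \<beta> p \<and> t \<le> p}"
      define B where "B = {t\<in>{1..n}. \<beta> t = \<beta> p}"
      have split: "N n y p k = card {t\<in>A. y t \<le> k} + card {t\<in>Bp. y t \<le> k}" for y
      proof -
        have e: "{t\<in>{1..n}. t \<le> p \<and> y t \<le> k} = {t\<in>A. y t \<le> k} \<union> {t\<in>Bp. y t \<le> k}"
        proof (rule set_eqI, rule iffI)
          fix t assume t: "t \<in> {t\<in>{1..n}. t \<le> p \<and> y t \<le> k}"
          then have "\<beta> t \<le> \<beta> p" using mono by auto
          then show "t \<in> {t\<in>A. y t \<le> k} \<union> {t\<in>Bp. y t \<le> k}" using t by (auto simp: A_def Bp_def)
        next
          fix t assume t: "t \<in> {t\<in>A. y t \<le> k} \<union> {t\<in>Bp. y t \<le> k}"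
          have "t \<le> p" if "t \<in> A"
          proof (rule ccontr)
            assume "\<not> t \<le> p"
            then have "\<beta> p \<le> \<beta> t" using mono by simp
            then show False using that by (simp add: A_def)
          qed
          then show "t \<in> {t\<in>{1..n}. t \<le> p \<and> y t \<le> k}" using t by (auto simp: A_def Bp_def)
        qed
        have "card ({t\<in>A. y t \<le> k} \<union> {t\<in>Bp. y t \<le> k}) = card {t\<in>A. y t \<le> k} + card {t\<in>Bp. y t \<le> k}"
          by (rule card_Un_disjoint) (auto simp: A_def Bp_def)
        then show ?thesis unfolding N_def e .
      qed
      have cA: "card {t\<in>A. x t \<le> k} = card {t\<in>A. v t \<le> k}"
      proof -
        have "card {t\<in>A. y t \<le> k} = card {m\<in>{1..n}. m \<le> k \<and> \<beta> (inv y m) < \<beta> p}" if "y \<in> Sym n" for y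
        proof -
          have "{t\<in>A. y t \<le> k} = {t\<in>{1..n}. \<beta> t < \<beta> p \<and> y t \<le> k}" by (auto simp: A_def)
          then show ?thesis using cnt_img[OF that, of "\<lambda>t. \<beta> t < \<beta> p" k] by simp
        qed
        moreover have "{m\<in>{1..n}. m \<le> k \<and> \<beta> (inv x m) < \<beta> p} = {m\<in>{1..n}. m \<le> k \<and> \<beta> (inv v m) < \<beta> p}"
          using fib by auto
        ultimately show ?thesis using x v by simp
      qed
      have cB: "card {t\<in>B. x t \<le> k} = card {t\<in>B. v t \<le> k}"
      proof -
        have "card {t\<in>B. y t \<le> k} = card {m\<in>{1..n}. m \<le> k \<and> \<beta> (inv y m) = \<beta> p}" if "y \<in> Sym n" for y
        proof -
          have "{t\<in>B. y t \<le> k} = {t\<in>{1..n}. \<beta> t = \<beta> p \<and> y t \<le> k}" by (auto simp: B_def)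
          then show ?thesis using cnt_img[OF that, of "\<lambda>t. \<beta> t = \<beta> p" k] by simp
        qed
        moreover have "{m\<in>{1..n}. m \<le> k \<and> \<beta> (inv x m) = \<beta> p} = {m\<in>{1..n}. m \<le> k \<and> \<beta> (inv v m) = \<beta> p}"
          using fib by auto
        ultimately show ?thesis using x v by simp
      qed
      have x1: "card {t\<in>Bp. x t \<le> k} \<le> card {t\<in>B. x t \<le> k}"
        by (rule card_mono) (auto simp: B_def Bp_def)
      have x2: "card {t\<in>Bp. x t \<le> k} \<le> card Bp"
        by (rule card_mono) (auto simp: Bp_def)
      have v12: "card {t\<in>Bp. v t \<le> k} = card Bp \<or> card {t\<in>Bp. v t \<le> k} = card {t\<in>B. v t \<le> k}"
      proof (cases "\<forall>t\<in>Bp. v t \<le> k")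
        case True
        then have "{t\<in>Bp. v t \<le> k} = Bp" by auto
        then show ?thesis by simp
      next
        case False
        then obtain t0 where t0: "t0 \<in> Bp" "\<not> v t0 \<le> k" by blast
        have "{t\<in>B. v t \<le> k} \<subseteq> {t\<in>Bp. v t \<le> k}"
        proof
          fix t assume t: "t \<in> {t\<in>B. v t \<le> k}"
          have "t \<le> p"
          proof (rule ccontr)
            assume "\<not> t \<le> p"
            then have "t0 < t" using t0(1) by (simp add: Bp_def)
            moreover have "1 \<le> t0" "t \<le> n" "\<beta> t0 = \<beta> t" using t0(1) t by (auto simp: Bp_def B_def)
            ultimately have "v t0 < v t" using block_incr[OF mono asc] by blast
            then show False using t t0(2) by simp
          qed
          then show "t \<in> {t\<in>Bp. v t \<le> k}" using t by (simp add: Bp_def B_def)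
        qed
        moreover have "{t\<in>Bp. v t \<le> k} \<subseteq> {t\<in>B. v t \<le> k}" by (auto simp: Bp_def B_def)
        ultimately have "{t\<in>Bp. v t \<le> k} = {t\<in>B. v t \<le> k}" by (rule equalityI[rotated])
        then show ?thesis by simp
      qed
      show ?thesis using split[of x] split[of v] cA cB x1 x2 v12 by linarith
    qed
  qed
  have eq: "N n x p k = N n v p k" for p k
  proof -
    have "N n v p k \<le> N n x p k" using xv by (simp add: tle_def)
    then show ?thesis using le[of p k] by simp
  qed
  have "x t = v t" for t
  proof (cases "t \<in> {1..n}")
    case True
    then have t: "1 \<le> t" "t \<le> n" by auto
    have iff: "x t \<le> k \<longleftrightarrow> v t \<le> k" for k
    proof -
      have "(if x t \<le> k then 1 else 0) = (if v t \<le> k then (1::nat) else 0)"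
        using N_step[OF t, of x k] N_step[OF t, of v k] eq[of t k] eq[of "t - 1" k] by linarith
      then show ?thesis by (simp split: if_splits)
    qed
    show ?thesis using iff[of "x t"] iff[of "v t"] by simp
  next
    case False then show ?thesis using Sym_out[OF x False] Sym_out[OF v False] by simp
  qed
  then show ?thesis by (simp add: fun_eq_iff)
qed

definition bt :: "nat list \<Rightarrow> nat \<Rightarrow> nat" where
  "bt d m = card {j. j < length d \<and> d ! j < m}"

definition gm :: "nat \<Rightarrow> nat list \<Rightarrow> nat \<Rightarrow> nat" where
  "gm n d m = card {j. j < length d \<and> n + 1 - d ! j \<le> m}"

lemma bt_mono: "a \<le> b \<Longrightarrow> bt d a \<le> bt d b"
  unfolding bt_def by (rule card_mono) auto

lemma gm_mono: "a \<le> b \<Longrightarrow> gm n d a \<le> gm n d b"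
  unfolding gm_def by (rule card_mono) auto

lemma bt_noti: assumes "bt d i = bt d (Suc i)" "j < length d" shows "d ! j \<noteq> i"
proof
  assume h: "d ! j = i"
  have "{j. j < length d \<and> d ! j < i} \<subset> {j. j < length d \<and> d ! j < Suc i}"
    using h assms(2) by auto
  then have "bt d i < bt d (Suc i)" unfolding bt_def by (rule psubset_card_mono[rotated]) auto
  then show False using assms(1) by simp
qed

lemma tau_img: assumes "1 \<le> i" "D \<noteq> i" shows "tau i ` {1..D} = {1..D}"
proof -
  have sub: "tau i ` {1..D} \<subseteq> {1..D}"
  proof
    fix y assume "y \<in> tau i ` {1..D}"
    then obtain t where t: "t \<in> {1..D}" "y = tau i t" by auto
    show "y \<in> {1..D}"
    proof (cases "t = i")
      case True then show ?thesis using t assms by auto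
    next
      case False
      show ?thesis
      proof (cases "t = Suc i")
        case True then show ?thesis using t assms by auto
      next
        case False then show ?thesis using t \<open>t \<noteq> i\<close> by simp
      qed
    qed
  qed
  moreover have "{1..D} \<subseteq> tau i ` {1..D}"
  proof
    fix y assume "y \<in> {1..D}"
    then have "tau i y \<in> tau i ` {1..D}" by blast
    then have "tau i y \<in> {1..D}" using sub by blast
    moreover have "y = tau i (tau i y)" by simp
    ultimately show "y \<in> tau i ` {1..D}" by (rule rev_image_eqI)
  qed
  ultimately show ?thesis by (rule equalityI)
qed

lemma pipsi_inv: assumes "1 \<le> i" "bt d i = bt d (Suc i)"
  shows "pipsi n d (y \<circ> tau i) = pipsi n d y"
proof -
  have "(y \<circ> tau i) ` {1..d ! j} = y ` {1..d ! j}" if "j < length d" for j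
  proof -
    have "(y \<circ> tau i) ` {1..d ! j} = y ` (tau i ` {1..d ! j})" by (simp only: image_comp)
    also have "\<dots> = y ` {1..d ! j}" by (simp only: tau_img[OF assms(1) bt_noti[OF assms(2) that]])
    finally show ?thesis .
  qed
  then show ?thesis unfolding pipsi_def by (intro ext sum.cong) auto
qed

lemma bt_compl: "bt d m + card {j. j < length d \<and> m \<le> d ! j} = length d"
proof -
  have "card ({j. j < length d \<and> d ! j < m} \<union> {j. j < length d \<and> m \<le> d ! j})
     = card {j. j < length d \<and> d ! j < m} + card {j. j < length d \<and> m \<le> d ! j}"
    by (rule card_Un_disjoint) auto
  moreover have "{j. j < length d \<and> d ! j < m} \<union> {j. j < length d \<and> m \<le> d ! j} = {..<length d}" by auto
  ultimately show ?thesis unfolding bt_def by simp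
qed

lemma pipsi_fib: assumes "y \<in> Sym n" "v \<in> Sym n" "pipsi n d y = pipsi n d v"
  shows "\<forall>k\<in>{1..n}. bt d (inv y k) = bt d (inv v k)"
proof
  fix k assume k: "k \<in> {1..n}"
  have "real (card {j. j < length d \<and> inv y k \<le> d ! j}) = real (card {j. j < length d \<and> inv v k \<le> d ! j})"
    using pipsi_alt[OF assms(1), of d k] pipsi_alt[OF assms(2), of d k] assms(3) k by simp
  then have "card {j. j < length d \<and> inv y k \<le> d ! j} = card {j. j < length d \<and> inv v k \<le> d ! j}"
    by (simp only: of_nat_eq_iff)
  then show "bt d (inv y k) = bt d (inv v k)" using bt_compl[of d "inv y k"] bt_compl[of d "inv v k"] by simp
qed

lemma piphi_alt: "piphi n d z k = (if k \<in> {1..n} then real (gm n d (z k)) else 0)"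
  unfolding piphi_def gm_def by simp

lemma inv_tau: "inv (tau i) = tau i"
  by (rule inv_unique_comp) (simp_all add: fun_eq_iff)

lemma gm_tau: assumes "gm n d i = gm n d (Suc i)" shows "gm n d (tau i m) = gm n d m"
  using assms by (cases "m = i"; cases "m = Suc i") auto

lemma G_inv: assumes "y \<in> Sym n" "1 \<le> i" "i < n" "gm n d i = gm n d (Suc i)"
  shows "piphi n d (inv (y \<circ> tau i)) = piphi n d (inv y)"
proof -
  have "inv (y \<circ> tau i) = inv (tau i) \<circ> inv y"
    by (rule o_inv_distrib[OF Sym_bij[OF assms(1)] Sym_bij[OF tau_Sym[OF assms(2,3)]]])
  then have e: "inv (y \<circ> tau i) = tau i \<circ> inv y" by (simp add: inv_tau)
  show ?thesis unfolding e by (rule ext) (simp add: piphi_alt gm_tau[OF assms(4)])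
qed

lemma G_fib: assumes "piphi n d (inv y) = piphi n d (inv v)"
  shows "\<forall>k\<in>{1..n}. gm n d (inv y k) = gm n d (inv v k)"
proof
  fix k assume k: "k \<in> {1..n}"
  have "real (gm n d (inv y k)) = real (gm n d (inv v k))"
    using piphi_alt[of n d "inv y" k] piphi_alt[of n d "inv v" k] assms k by simp
  then show "gm n d (inv y k) = gm n d (inv v k)" by (simp only: of_nat_eq_iff)
qed

lemma img_inv: assumes "u \<in> Sym n" "v \<in> Sym n"
  shows "piphi n d ` iv n u v = (\<lambda>y. piphi n d (inv y)) ` iv n (inv u) (inv v)"
proof (rule set_eqI, rule iffI)
  fix z assume "z \<in> piphi n d ` iv n u v"
  then obtain x where x: "x \<in> Sym n" "tle n u x" "tle n x v" "z = piphi n d x" by (auto simp: iv_def)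
  have "tle n (inv u) (inv x)" "tle n (inv x) (inv v)"
    using tle_inv[OF assms(1) x(1) x(2)] tle_inv[OF x(1) assms(2) x(3)] by auto
  then have "inv x \<in> iv n (inv u) (inv v)" using Sym_inv[OF x(1)] by (simp add: iv_def)
  moreover have "z = piphi n d (inv (inv x))" using x(1) x(4) by simp
  ultimately show "z \<in> (\<lambda>y. piphi n d (inv y)) ` iv n (inv u) (inv v)" by blast
next
  fix z assume "z \<in> (\<lambda>y. piphi n d (inv y)) ` iv n (inv u) (inv v)"
  then obtain y where y: "y \<in> Sym n" "tle n (inv u) y" "tle n y (inv v)" "z = piphi n d (inv y)"
    by (auto simp: iv_def)
  have "tle n (inv (inv u)) (inv y)" by (rule tle_inv[OF Sym_inv[OF assms(1)] y(1) y(2)])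
  moreover have "tle n (inv y) (inv (inv v))" by (rule tle_inv[OF y(1) Sym_inv[OF assms(2)] y(3)])
  ultimately have "tle n u (inv y)" "tle n (inv y) v" using assms by simp_all
  then have "inv y \<in> iv n u v" using Sym_inv[OF y(1)] by (simp add: iv_def)
  then show "z \<in> piphi n d ` iv n u v" using y(4) by blast
qed

lemma BI_gen_iff: "(u, v) \<in> BI_gen n f \<longleftrightarrow> u \<in> Sym n \<and> v \<in> Sym n \<and> tle n u v \<and>
   (\<forall>x\<in>Sym n. f x = f v \<and> tle n x v \<longrightarrow> x = v)"
  unfolding BI_gen_def by (auto simp: bruhat_iff)

lemma bint_eq: "u \<in> Sym n \<Longrightarrow> v \<in> Sym n \<Longrightarrow> bruhat_interval n u v = iv n u v"
  unfolding bruhat_interval_def iv_def by (auto simp: bruhat_iff)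

theorem theorem4p6:
  fixes n :: nat and d :: "nat list"
  assumes "n \<ge> 1"
    and "d \<noteq> []"
    and "sorted_wrt (<) d"
    and "\<forall>j\<in>set d. 1 \<le> j \<and> j \<le> n"
  shows "{Q d n u v | u v. (u, v) \<in> BI d n} = {Q_tw d n u v | u v. (u, v) \<in> BI_tw d n}"
proof (rule set_eqI, rule iffI)
  fix P assume "P \<in> {Q d n u v | u v. (u, v) \<in> BI d n}"
  then obtain u v where P: "P = Q d n u v" and uv: "(u, v) \<in> BI d n" by blast
  have u: "u \<in> Sym n" and v: "v \<in> Sym n" and t: "tle n u v"
    using uv unfolding BI_def BI_gen_iff by auto
  have ab: "tle n (sg n v) (sg n u)" using sg_tle_iff[OF v u] t by simp
  have finv: "\<And>x i. x \<in> Sym n \<Longrightarrow> 1 \<le> i \<Longrightarrow> i < n \<Longrightarrow> bt d i = bt d (Suc i) \<Longrightarrow>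
      pipsi n d (x \<circ> tau i) = pipsi n d x"
    using pipsi_inv by blast
  obtain u' v' where r: "u' \<in> Sym n" "v' \<in> Sym n" "tle n u' v'"
    "\<forall>i. 1 \<le> i \<and> i < n \<and> bt d i = bt d (Suc i) \<longrightarrow> v' i < v' (Suc i)"
    "pipsi n d ` iv n u' v' = pipsi n d ` iv n (sg n v) (sg n u)"
    using reduction[where f = "pipsi n d" and \<beta> = "bt d", OF finv sg_Sym[OF v] sg_Sym[OF u] ab] by blast
  have "(u', v') \<in> BI_tw d n"
    unfolding BI_tw_def BI_gen_iff
  proof (intro conjI r(1,2,3) ballI impI)
    fix x assume x: "x \<in> Sym n" "pipsi n d x = pipsi n d v' \<and> tle n x v'"
    show "x = v'"
      by (rule minimal[where \<beta> = "bt d", OF bt_mono r(2) r(4) x(1) pipsi_fib[OF x(1) r(2)]]) (use x in auto)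
  qed
  moreover have "P = Q_tw d n u' v'"
    unfolding P Q_def Q_tw_def bint_eq[OF u v] bint_eq[OF r(1) r(2)] img_swap[OF u v] r(5) ..
  ultimately show "P \<in> {Q_tw d n u v | u v. (u, v) \<in> BI_tw d n}" by blast
next
  fix P assume "P \<in> {Q_tw d n u v | u v. (u, v) \<in> BI_tw d n}"
  then obtain a b where P: "P = Q_tw d n a b" and ab: "(a, b) \<in> BI_tw d n" by blast
  have a: "a \<in> Sym n" and b: "b \<in> Sym n" and t: "tle n a b"
    using ab unfolding BI_tw_def BI_gen_iff by auto
  define u where "u = inv (b \<circ> wz n)"
  define v where "v = inv (a \<circ> wz n)"
  have u: "u \<in> Sym n" "sg n u = b" using sg_inv[OF b] u_def by auto
  have v: "v \<in> Sym n" "sg n v = a" using sg_inv[OF a] v_def by auto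
  have uv: "tle n u v" using sg_tle_iff[OF v(1) u(1)] t u(2) v(2) by simp
  have e1: "pipsi n d ` iv n a b = piphi n d ` iv n u v" using img_swap[OF u(1) v(1)] u(2) v(2) by simp
  have e2: "piphi n d ` iv n u v = (\<lambda>y. piphi n d (inv y)) ` iv n (inv u) (inv v)"
    by (rule img_inv[OF u(1) v(1)])
  have tinv: "tle n (inv u) (inv v)" using tle_inv[OF u(1) v(1) uv] .
  have finv: "\<And>x i. x \<in> Sym n \<Longrightarrow> 1 \<le> i \<Longrightarrow> i < n \<Longrightarrow> gm n d i = gm n d (Suc i) \<Longrightarrow>
      piphi n d (inv (x \<circ> tau i)) = piphi n d (inv x)"
    using G_inv by blast
  obtain p q where r: "p \<in> Sym n" "q \<in> Sym n" "tle n p q"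
    "\<forall>i. 1 \<le> i \<and> i < n \<and> gm n d i = gm n d (Suc i) \<longrightarrow> q i < q (Suc i)"
    "(\<lambda>y. piphi n d (inv y)) ` iv n p q = (\<lambda>y. piphi n d (inv y)) ` iv n (inv u) (inv v)"
    using reduction[where f = "\<lambda>y. piphi n d (inv y)" and \<beta> = "gm n d", OF finv Sym_inv[OF u(1)] Sym_inv[OF v(1)] tinv]
    by blast
  have pq: "inv p \<in> Sym n" "inv q \<in> Sym n" using Sym_inv r(1,2) by auto
  have e3: "piphi n d ` iv n (inv p) (inv q) = (\<lambda>y. piphi n d (inv y)) ` iv n p q"
    using img_inv[OF pq] r(1,2) by simp
  have "(inv p, inv q) \<in> BI d n"
    unfolding BI_def BI_gen_iff
  proof (intro conjI pq ballI impI)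
    show "tle n (inv p) (inv q)" by (rule tle_inv[OF r(1,2,3)])
  next
    fix x assume x: "x \<in> Sym n" "piphi n d x = piphi n d (inv q) \<and> tle n x (inv q)"
    have xi: "inv x \<in> Sym n" using Sym_inv[OF x(1)] .
    have "tle n (inv x) (inv (inv q))" using tle_inv[OF x(1) pq(2)] x(2) by blast
    then have tx: "tle n (inv x) q" using r(2) by simp
    have "piphi n d (inv (inv x)) = piphi n d (inv q)" using x by simp
    then have fx: "\<forall>k\<in>{1..n}. gm n d (inv (inv x) k) = gm n d (inv q k)" by (rule G_fib)
    have "inv x = q"
      by (rule minimal[where \<beta> = "gm n d", OF gm_mono r(2) r(4) xi fx tx])
    then show "x = inv q" using x(1) by (metis inv_inv_Sym)
  qed
  moreover have "P = Q d n (inv p) (inv q)"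
    unfolding P Q_def Q_tw_def bint_eq[OF a b] bint_eq[OF pq] e1 e2 e3 r(5) ..
  ultimately show "P \<in> {Q d n u v | u v. (u, v) \<in> BI d n}" by blast
qed

end
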